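(* Suppose there exist two orthogonal designs of order $n$ and type $(s_1,\ldots,s_u)$ (in the same variables) that are unbiased with parameter $\alpha$. Then for any nonempty subset $S\subseteq\{1,\ldots,u\}$ there exist two weighing matrices that are quasi-unbiased for the parameters $\left(n,\sum_{i\in S}s_i,\alpha,(\sum_{i\in S}s_i)^2/\alpha\right)$.
   Context: A weighing matrix of order $n$ and weight $k$ is an $n\times n$ $(0,1,-1)$-matrix $W$ with $WW^\top=kI_n$. An orthogonal design of order $n$ and type $(s_1,\ldots,s_u)$ in distinct commuting real indeterminates $x_1,\ldots,x_u$ is an $n\times n$ matrix $D$ with entries in $\{0,\pm x_1,\ldots,\pm x_u\}$ such that $DD^\top=(s_1x_1^2+\cdots+s_ux_u^2)I_n$. Two such designs $D_1,D_2$ are unbiased with parameter $\alpha$ if $\alpha>0$ and there is a $(0,1,-1)$-matrix $W$ with $D_1D_2^\top=\frac{s_1x_1^2+\cdots+s_ux_u^2}{\sqrt\alpha}W$. Weighing matrices $W_1,W_2$ of order $n$ and weight $k$ are quasi-unbiased for parameters $(n,k,l,a)$ if $\frac1{\sqrt a}W_1W_2^\top$ is a weighing matrix of order $n$ and weight $l$. *)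

theory Defs
  imports "HOL-Analysis.Analysis"
begin

definition pm_matrix :: "real^'n^'n \<Rightarrow> bool" where
  "pm_matrix W \<longleftrightarrow> (\<forall>i j. W $ i $ j \<in> {0, 1, -1})"

definition weighing_matrix :: "real \<Rightarrow> real^'n^'n \<Rightarrow> bool" where
  "weighing_matrix k W \<longleftrightarrow> pm_matrix W \<and> W ** transpose W = k *\<^sub>R mat 1"

definition quasi_unbiased :: "real \<Rightarrow> real \<Rightarrow> real \<Rightarrow> real^'n^'n \<Rightarrow> real^'n^'n \<Rightarrow> bool" where
  "quasi_unbiased k l a W1 W2 \<longleftrightarrow>
     weighing_matrix k W1 \<and> weighing_matrix k W2 \<and>
     weighing_matrix l ((1 / sqrt a) *\<^sub>R (W1 ** transpose W2))"

text \<open>A design in indeterminates x_1..x_u is given symbolically: entry (c, v) stands for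
  c * x_v with c in {-1,0,1} and v in {1..u}.  Evaluation at a real assignment x.\<close>
type_synonym ('n) design = "(int \<times> nat)^'n^'n"

definition design_entries_ok :: "nat \<Rightarrow> ('n::finite) design \<Rightarrow> bool" where
  "design_entries_ok u D \<longleftrightarrow> (\<forall>i j. fst (D $ i $ j) \<in> {-1, 0, 1} \<and> snd (D $ i $ j) \<in> {1..u})"

definition eval_design :: "(nat \<Rightarrow> real) \<Rightarrow> ('n::finite) design \<Rightarrow> real^'n^'n" where
  "eval_design x D = (\<chi> i j. of_int (fst (D $ i $ j)) * x (snd (D $ i $ j)))"

definition design_form :: "nat \<Rightarrow> (nat \<Rightarrow> nat) \<Rightarrow> (nat \<Rightarrow> real) \<Rightarrow> real" where
  "design_form u s x = (\<Sum>i=1..u. real (s i) * (x i)\<^sup>2)"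

text \<open>Orthogonal design of type (s_1,...,s_u) (s_i positive integers):
  D D^T = (s_1 x_1^2 + ... + s_u x_u^2) I as an identity in the commuting real
  indeterminates, i.e. for all real values of x.\<close>
definition orthogonal_design :: "nat \<Rightarrow> (nat \<Rightarrow> nat) \<Rightarrow> ('n::finite) design \<Rightarrow> bool" where
  "orthogonal_design u s D \<longleftrightarrow> design_entries_ok u D \<and> (\<forall>i\<in>{1..u}. s i > 0) \<and>
     (\<forall>x. eval_design x D ** transpose (eval_design x D) = design_form u s x *\<^sub>R mat 1)"

definition unbiased_designs :: "nat \<Rightarrow> (nat \<Rightarrow> nat) \<Rightarrow> real \<Rightarrow> ('n::finite) design \<Rightarrow> ('n::finite) design \<Rightarrow> bool" where
  "unbiased_designs u s \<alpha> D1 D2 \<longleftrightarrow> \<alpha> > 0 \<and>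
     (\<exists>W :: real^'n^'n. pm_matrix W \<and>
        (\<forall>x. eval_design x D1 ** transpose (eval_design x D2)
              = (design_form u s x / sqrt \<alpha>) *\<^sub>R W))"

end

theory Submission
  imports Defs
begin

lemma scR_mm_l: "((c::real) *\<^sub>R (A::real^'m^'n)) ** (B::real^'k^'m) = c *\<^sub>R (A ** B)"
  by (simp add: matrix_matrix_mult_def vec_eq_iff sum_distrib_left mult.assoc)

lemma scR_mm_r: "(A::real^'m^'n) ** ((c::real) *\<^sub>R (B::real^'k^'m)) = c *\<^sub>R (A ** B)"
  by (simp add: matrix_matrix_mult_def vec_eq_iff sum_distrib_left mult.left_commute)

lemma flip_square:
  fixes A :: "real^'n^'n"
  assumes "A ** transpose A = k *\<^sub>R mat 1" "k \<noteq> 0"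
  shows "transpose A ** A = k *\<^sub>R mat 1"
proof -
  have "A ** ((1/k) *\<^sub>R transpose A) = mat 1"
    using assms by (simp add: scR_mm_r)
  hence "((1/k) *\<^sub>R transpose A) ** A = mat 1"
    using matrix_left_right_inverse by blast
  hence "k *\<^sub>R (((1/k) *\<^sub>R transpose A) ** A) = k *\<^sub>R mat 1" by simp
  thus ?thesis using assms(2) by (simp add: scR_mm_l)
qed

theorem proposition3p3:
  fixes D1 D2 :: "'n::finite design" and u :: nat and s :: "nat \<Rightarrow> nat"
    and \<alpha> :: real and S :: "nat set"
  assumes "orthogonal_design u s D1" and "orthogonal_design u s D2"
    and "unbiased_designs u s \<alpha> D1 D2"
    and "S \<subseteq> {1..u}" and "S \<noteq> {}"
  shows "\<exists>W1 W2 :: real^'n^'n.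
           quasi_unbiased (real (\<Sum>i\<in>S. s i)) \<alpha> ((real (\<Sum>i\<in>S. s i))\<^sup>2 / \<alpha>) W1 W2"
proof -
  define x :: "nat \<Rightarrow> real" where "x i = (if i \<in> S then 1 else 0)" for i
  define K where "K = real (\<Sum>i\<in>S. s i)"
  have finS: "finite S" using assms(4) finite_subset by blast
  have form: "design_form u s x = K"
  proof -
    have "design_form u s x = (\<Sum>i\<in>{1..u}. if i \<in> S then real (s i) else 0)"
      unfolding design_form_def x_def by (intro sum.cong) auto
    also have "\<dots> = (\<Sum>i\<in>{1..u} \<inter> S. real (s i))"
      by (simp add: sum.inter_restrict)
    also have "{1..u} \<inter> S = S" using assms(4) by blast
    finally show ?thesis unfolding K_def by simp
  qed
  have Kpos: "K > 0"
  proof -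
    obtain i where i: "i \<in> S" using assms(5) by blast
    have "s i > 0" using assms(1) assms(4) i unfolding orthogonal_design_def by blast
    hence "0 < (\<Sum>i\<in>S. s i)" using finS i
      by (metis gr0I sum_eq_0_iff)
    thus ?thesis unfolding K_def by (simp del: of_nat_sum add: of_nat_sum[symmetric])
  qed
  have apos: "\<alpha> > 0" using assms(3) unfolding unbiased_designs_def by blast
  obtain W where Wpm: "pm_matrix W" and
    WE: "eval_design x D1 ** transpose (eval_design x D2) = (K / sqrt \<alpha>) *\<^sub>R W"
    using assms(3) form unfolding unbiased_designs_def by metis
  define W1 where "W1 = eval_design x D1"
  define W2 where "W2 = eval_design x D2"
  have pm: "pm_matrix (eval_design x D)" if "design_entries_ok u D" for D :: "'n design"
    using that unfolding pm_matrix_def design_entries_ok_def eval_design_def x_def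
  proof (intro allI)
    fix i j
    have "fst (D $ i $ j) \<in> {-1,0,1}" using that unfolding design_entries_ok_def by blast
    thus "(\<chi> i j. of_int (fst (D $ i $ j)) * (if snd (D $ i $ j) \<in> S then 1 else 0)) $ i $ j \<in> {0, 1, -1::real}"
      by auto
  qed
  have O1: "W1 ** transpose W1 = K *\<^sub>R mat 1"
    using assms(1) form unfolding W1_def orthogonal_design_def by metis
  have O2: "W2 ** transpose W2 = K *\<^sub>R mat 1"
    using assms(2) form unfolding W2_def orthogonal_design_def by metis
  have w1: "weighing_matrix K W1"
    using O1 pm assms(1) unfolding weighing_matrix_def W1_def orthogonal_design_def by blast
  have w2: "weighing_matrix K W2"
    using O2 pm assms(2) unfolding weighing_matrix_def W2_def orthogonal_design_def by blast
  have sq: "sqrt (K\<^sup>2 / \<alpha>) = K / sqrt \<alpha>"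
    using Kpos apos by (simp add: real_sqrt_divide)
  have sa: "sqrt \<alpha> > 0" using apos by simp
  have eqW: "(1 / sqrt (K\<^sup>2 / \<alpha>)) *\<^sub>R (W1 ** transpose W2) = W"
    using WE Kpos sa unfolding W1_def W2_def sq by simp
  have T2: "transpose W2 ** W2 = K *\<^sub>R mat 1"
    using flip_square[OF O2] Kpos by simp
  have "(W1 ** transpose W2) ** transpose (W1 ** transpose W2) = W1 ** (transpose W2 ** W2) ** transpose W1"
    by (simp add: matrix_transpose_mul matrix_mul_assoc)
  also have "\<dots> = K *\<^sub>R (W1 ** transpose W1)"
    by (simp add: T2 scR_mm_l scR_mm_r)
  also have "\<dots> = (K * K) *\<^sub>R mat 1" by (simp add: O1)
  finally have P: "(W1 ** transpose W2) ** transpose (W1 ** transpose W2) = (K*K) *\<^sub>R mat 1" .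
  have "W1 ** transpose W2 = (K / sqrt \<alpha>) *\<^sub>R W" using WE unfolding W1_def W2_def .
  with P have "((K / sqrt \<alpha>) * (K / sqrt \<alpha>)) *\<^sub>R (W ** transpose W) = (K*K) *\<^sub>R mat 1"
    by (simp add: scR_mm_l scR_mm_r transpose_scalar)
  moreover have "(K / sqrt \<alpha>) * (K / sqrt \<alpha>) = (K*K) / \<alpha>"
    using apos by (simp add: field_simps)
  ultimately have "((K*K) / \<alpha>) *\<^sub>R (W ** transpose W) = (K*K) *\<^sub>R mat 1" using apos by simp
  hence "(\<alpha> / (K*K)) *\<^sub>R (((K*K) / \<alpha>) *\<^sub>R (W ** transpose W)) = (\<alpha> / (K*K)) *\<^sub>R ((K*K) *\<^sub>R mat 1)"
    by simp
  hence WW: "W ** transpose W = \<alpha> *\<^sub>R mat 1" using Kpos apos by simp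
  have "weighing_matrix \<alpha> ((1 / sqrt (K\<^sup>2 / \<alpha>)) *\<^sub>R (W1 ** transpose W2))"
    unfolding eqW weighing_matrix_def using Wpm WW by simp
  hence "quasi_unbiased K \<alpha> (K\<^sup>2 / \<alpha>) W1 W2"
    unfolding quasi_unbiased_def using w1 w2 by simp
  thus ?thesis unfolding K_def by blast
qed

end
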